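(* Let $M,K,N\ge 1$ be integers, let $\mathcal{S}\subseteq\{1,\dots,M\}$ be a fixed nonempty set of participating devices, and let $\sigma_h^2>0$, $\sigma_z^2>0$, $\bar\beta>0$, $p>0$ and $\beta_m>0$ ($m\in\mathcal{S}$) be constants. Assume all devices have the same data fraction $p_m=p$, and for $m\in\mathcal{S}$ let $C_m=p\,c_m$ where $c_m$ is a (possibly random) positive integer; set $C=\sum_{m\in\mathcal{S}}C_m$. Let $h_{m,k}^n=\sqrt{\beta_m}\,g_{m,k}^n$ for $m\in\mathcal{S}$, $k\in\{1,\dots,K\}$, $n\in\{1,\dots,N\}$, where the $g_{m,k}^n$ are i.i.d. $\mathcal{CN}(0,\sigma_h^2)$, and let $z_k^n$ ($k\in\{1,\dots,K\}$, $n\in\{1,\dots,N\}$) be i.i.d. circularly symmetric complex Gaussian $\mathcal{CN}(0,\sigma_z^2)$; assume the families $\{g_{m,k}^n\}$, $\{z_k^n\}$ and $\{c_m\}$ are mutually independent. Define the noise term $$y^{n,noise}=\frac{1}{K}\sum_{m\in\mathcal{S}}\sum_{k=1}^{K}\big(h_{m,k}^n\big)^{*}z_k^n,$$ and for $n\in\{1,\dots,N\}$ set $\Delta\hat\theta_{PS,3}^{n}=\frac{1}{C\sigma_h^2\bar\beta}\operatorname{Re}\{y^{n,noise}\}$ and $\Delta\hat\theta_{PS,3}^{n+N}=\frac{1}{C\sigma_h^2\bar\beta}\operatorname{Im}\{y^{n,noise}\}$. Then $$\sum_{n=1}^{2N}\mathbb{E}\Big[\big(\Delta\hat\theta_{P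S,3}^{n}\big)^2\Big]\le\frac{\sigma_z^2N}{p^2K\sigma_h^2}\sum_{m\in\mathcal{S}}\frac{\beta_m}{\bar\beta^2}.$$
   Context: Setting: over-the-air federated learning with $M$ single-antenna energy-harvesting devices and a parameter server (PS) with $K$ antennas receiving $N$ complex symbols (representing $2N$ real model coordinates). $\mathcal{S}$ is the set of devices participating in the current global iteration; $p_m$ is the fraction of the total data held by device $m$ and $c_m$ is its cooldown multiplier (number of iterations since its previous energy arrival), with $C_m=p_mc_m$ its aggregation weight. $\beta_m$ is the large-scale fading coefficient of device $m$, $z_k^n$ is the receiver noise at antenna $k$, and $\bar\beta>0$ is a fixed normalization constant used by the PS. $^{*}$ denotes complex conjugation. *)

theory Defs
  imports "HOL-Probability.Probability"
begin

text \<open>Circularly symmetric complex Gaussian CN(0, s2): real and imaginary parts are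
  independent real Gaussians with mean 0 and variance s2/2.\<close>
definition complex_normal :: "'a measure \<Rightarrow> ('a \<Rightarrow> complex) \<Rightarrow> real \<Rightarrow> bool" where
  "complex_normal \<Omega> X s2 \<longleftrightarrow>
     X \<in> borel_measurable \<Omega> \<and>
     distributed \<Omega> lborel (\<lambda>\<omega>. Re (X \<omega>)) (normal_density 0 (sqrt (s2 / 2))) \<and>
     distributed \<Omega> lborel (\<lambda>\<omega>. Im (X \<omega>)) (normal_density 0 (sqrt (s2 / 2))) \<and>
     prob_space.indep_var \<Omega> borel (\<lambda>\<omega>. Re (X \<omega>)) borel (\<lambda>\<omega>. Im (X \<omega>))"

text \<open>Index for the independent components: each channel coefficient g_{m,k}^n,
  each noise sample z_k^n, and the whole cooldown family {c_m} as one block.\<close>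
datatype rv_index = Gidx nat nat nat | Zidx nat nat | Cfam

definition rv_sigma ::
  "'a measure \<Rightarrow> nat set \<Rightarrow> (nat \<Rightarrow> nat \<Rightarrow> nat \<Rightarrow> 'a \<Rightarrow> complex) \<Rightarrow>
   (nat \<Rightarrow> nat \<Rightarrow> 'a \<Rightarrow> complex) \<Rightarrow> (nat \<Rightarrow> 'a \<Rightarrow> nat) \<Rightarrow> rv_index \<Rightarrow> 'a set set" where
  "rv_sigma \<Omega> S g z c i = (case i of
      Gidx m k n \<Rightarrow> {g m k n -` A \<inter> space \<Omega> | A. A \<in> sets borel}
    | Zidx k n \<Rightarrow> {z k n -` A \<inter> space \<Omega> | A. A \<in> sets borel}
    | Cfam \<Rightarrow> sigma_sets (space \<Omega>)
               (\<Union>m\<in>S. {c m -` A \<inter> space \<Omega> | A. A \<in> sets (count_space (UNIV :: nat set))}))"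

definition rv_indices :: "nat set \<Rightarrow> nat \<Rightarrow> nat \<Rightarrow> rv_index set" where
  "rv_indices S K N =
     {Gidx m k n | m k n. m \<in> S \<and> k \<in> {1..K} \<and> n \<in> {1..N}} \<union>
     {Zidx k n | k n. k \<in> {1..K} \<and> n \<in> {1..N}} \<union> {Cfam}"

definition y_noise ::
  "nat set \<Rightarrow> nat \<Rightarrow> (nat \<Rightarrow> real) \<Rightarrow> (nat \<Rightarrow> nat \<Rightarrow> nat \<Rightarrow> 'a \<Rightarrow> complex) \<Rightarrow>
   (nat \<Rightarrow> nat \<Rightarrow> 'a \<Rightarrow> complex) \<Rightarrow> nat \<Rightarrow> 'a \<Rightarrow> complex" where
  "y_noise S K \<beta> g z n \<omega> =
     (1 / of_nat K) * (\<Sum>m\<in>S. \<Sum>k\<in>{1..K}.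
        cnj (complex_of_real (sqrt (\<beta> m)) * g m k n \<omega>) * z k n \<omega>)"

definition C_tot :: "nat set \<Rightarrow> real \<Rightarrow> (nat \<Rightarrow> 'a \<Rightarrow> nat) \<Rightarrow> 'a \<Rightarrow> real" where
  "C_tot S p c \<omega> = (\<Sum>m\<in>S. p * real (c m \<omega>))"

definition dtheta3 ::
  "nat set \<Rightarrow> nat \<Rightarrow> nat \<Rightarrow> real \<Rightarrow> real \<Rightarrow> real \<Rightarrow> (nat \<Rightarrow> real) \<Rightarrow> (nat \<Rightarrow> 'a \<Rightarrow> nat) \<Rightarrow>
   (nat \<Rightarrow> nat \<Rightarrow> nat \<Rightarrow> 'a \<Rightarrow> complex) \<Rightarrow> (nat \<Rightarrow> nat \<Rightarrow> 'a \<Rightarrow> complex) \<Rightarrow> nat \<Rightarrow> 'a \<Rightarrow> real" where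
  "dtheta3 S K N sh2 bbar p \<beta> c g z n \<omega> =
     (if n \<le> N then Re (y_noise S K \<beta> g z n \<omega>)
      else Im (y_noise S K \<beta> g z (n - N) \<omega>)) / (C_tot S p c \<omega> * sh2 * bbar)"

end

theory Submission
  imports Defs
begin

lemma (in prob_space) indep_prod:
  fixes X :: "'i \<Rightarrow> 'a \<Rightarrow> complex" and f1 :: "complex \<Rightarrow> complex"
    and F :: "('i \<Rightarrow> complex) \<Rightarrow> complex"
  assumes ind: "indep_vars (\<lambda>_. borel) X I" and iI: "i \<in> I" and LI: "L \<subseteq> I" and iL: "i \<notin> L"
    and f1m: "f1 \<in> borel_measurable borel"
    and Fm: "F \<in> borel_measurable (PiM L (\<lambda>_. borel))"
    and H: "\<And>\<omega>. F (restrict (\<lambda>j. X j \<omega>) L) = H \<omega>"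
    and int1: "integrable M (\<lambda>\<omega>. f1 (X i \<omega>))" and int2: "integrable M H"
  shows "integrable M (\<lambda>\<omega>. f1 (X i \<omega>) * H \<omega>)"
    and "(\<integral>\<omega>. f1 (X i \<omega>) * H \<omega> \<partial>M) = (\<integral>\<omega>. f1 (X i \<omega>) \<partial>M) * (\<integral>\<omega>. H \<omega> \<partial>M)"
proof -
  have "indep_var (PiM {i} (\<lambda>_. borel)) (\<lambda>\<omega>. restrict (\<lambda>j. X j \<omega>) {i})
          (PiM L (\<lambda>_. borel)) (\<lambda>\<omega>. restrict (\<lambda>j. X j \<omega>) L)"
    using iI LI iL by (intro indep_var_restrict[OF ind]) auto
  moreover have "(\<lambda>f. f1 (f i)) \<in> borel_measurable (PiM {i} (\<lambda>_. borel))"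
    using measurable_compose[OF measurable_component_singleton[of i "{i}" "\<lambda>_. borel"] f1m] by simp
  ultimately have "indep_var borel ((\<lambda>f. f1 (f i)) \<circ> (\<lambda>\<omega>. restrict (\<lambda>j. X j \<omega>) {i}))
      borel (F \<circ> (\<lambda>\<omega>. restrict (\<lambda>j. X j \<omega>) L))"
    by (rule indep_var_compose[OF _ _ Fm])
  then have iv: "indep_var borel (\<lambda>\<omega>. f1 (X i \<omega>)) borel H"
    by (simp add: comp_def H)
  show "integrable M (\<lambda>\<omega>. f1 (X i \<omega>) * H \<omega>)"
    by (rule indep_var_integrable[OF iv int1 int2])
  show "(\<integral>\<omega>. f1 (X i \<omega>) * H \<omega> \<partial>M) = (\<integral>\<omega>. f1 (X i \<omega>) \<partial>M) * (\<integral>\<omega>. H \<omega> \<partial>M)"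
    by (rule indep_var_lebesgue_integral[OF iv int1 int2])
qed

lemma comp_meas:
  "j \<in> L \<Longrightarrow> (\<lambda>f. f j) \<in> borel_measurable (PiM L (\<lambda>_. (borel :: complex measure)))"
  by (rule measurable_component_singleton)

lemma meas_test:
  assumes "a \<in> L" "b \<in> L"
  shows "(\<lambda>f. cnj (f a) * (f b :: complex)) \<in> borel_measurable (PiM L (\<lambda>_. borel))"
  using assms by (intro borel_measurable_times measurable_compose[OF comp_meas] borel_measurable_continuous_onI continuous_intros comp_meas)


lemma (in prob_space) real_normal_facts:
  fixes Y :: "'a \<Rightarrow> real"
  assumes s: "0 < s" and D: "distributed M lborel Y (normal_density 0 s)"
  shows "integrable M Y" "expectation Y = 0" "integrable M (\<lambda>x. (Y x)\<^sup>2)"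
    "expectation (\<lambda>x. (Y x)\<^sup>2) = s\<^sup>2"
proof -
  show "integrable M Y"
    by (rule distributed_integrable_var[OF D]) (use integrable_normal_moment_nz_1[OF s] in auto)
  show e: "expectation Y = 0" by (rule normal_distributed_expectation[OF s D])
  have "integrable lborel (\<lambda>x. normal_density 0 s x * (x - 0)^2)"
    using integrable_normal_moment[OF s] by blast
  then show "integrable M (\<lambda>x. (Y x)\<^sup>2)"
    using distributed_integrable[OF D, of "\<lambda>x. x\<^sup>2"] by simp
  show "expectation (\<lambda>x. (Y x)\<^sup>2) = s\<^sup>2"
    using normal_distributed_variance[OF s D] e by simp
qed

lemma (in prob_space) cn_facts:
  assumes cn: "complex_normal M X v" and v: "v > 0"
  shows "integrable M X" "expectation X = 0" "integrable M (\<lambda>\<omega>. X \<omega> * cnj (X \<omega>))"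
    "expectation (\<lambda>\<omega>. X \<omega> * cnj (X \<omega>)) = complex_of_real v"
proof -
  let ?s = "sqrt (v/2)"
  have s: "0 < ?s" using v by simp
  have DR: "distributed M lborel (\<lambda>\<omega>. Re (X \<omega>)) (normal_density 0 ?s)"
   and DI: "distributed M lborel (\<lambda>\<omega>. Im (X \<omega>)) (normal_density 0 ?s)"
    using cn unfolding complex_normal_def by auto
  note R = real_normal_facts[OF s DR] and I = real_normal_facts[OF s DI]
  have Xeq: "X = (\<lambda>\<omega>. complex_of_real (Re (X \<omega>)) + \<i> * complex_of_real (Im (X \<omega>)))"
    by (simp add: fun_eq_iff complex_eq_iff)
  show "integrable M X"
    by (subst Xeq) (simp add: R(1) I(1))
  have "expectation X = expectation (\<lambda>\<omega>. complex_of_real (Re (X \<omega>)) + \<i> * complex_of_real (Im (X \<omega>)))"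
    by (rule arg_cong[OF Xeq])
  also have "\<dots> = 0"
    using Bochner_Integration.integral_add[where M=M and f="\<lambda>\<omega>. complex_of_real (Re (X \<omega>))" and g="\<lambda>\<omega>. \<i> * complex_of_real (Im (X \<omega>))"]
    by (simp add: R(1,2) I(1,2))
  finally show "expectation X = 0" .
  have Peq: "(\<lambda>\<omega>. X \<omega> * cnj (X \<omega>)) = (\<lambda>\<omega>. complex_of_real ((Re (X \<omega>))\<^sup>2 + (Im (X \<omega>))\<^sup>2))"
    by (simp add: complex_mult_cnj)
  show "integrable M (\<lambda>\<omega>. X \<omega> * cnj (X \<omega>))"
    unfolding Peq by (intro integrable_of_real Bochner_Integration.integrable_add R(3) I(3))
  have "expectation (\<lambda>\<omega>. (Re (X \<omega>))\<^sup>2 + (Im (X \<omega>))\<^sup>2) = v"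
    using R(3,4) I(3,4) v by (simp add: Bochner_Integration.integral_add)
  then show "expectation (\<lambda>\<omega>. X \<omega> * cnj (X \<omega>)) = complex_of_real v"
    unfolding Peq integral_complex_of_real by simp
qed


lemma mf_id: "(\<lambda>x::complex. x) \<in> borel_measurable borel" by simp
lemma mf_cnj: "(\<lambda>x::complex. cnj x) \<in> borel_measurable borel"
  by (intro borel_measurable_continuous_onI continuous_intros)
lemma mf_sq: "(\<lambda>x::complex. x * cnj x) \<in> borel_measurable borel"
  by (intro borel_measurable_continuous_onI continuous_intros)

lemmas Fmeas = borel_measurable_times measurable_compose[OF comp_meas mf_cnj] comp_meas

lemma (in prob_space) core4:
  fixes X :: "'i \<Rightarrow> 'a \<Rightarrow> complex"
  assumes ind: "indep_vars (\<lambda>_. borel) X I"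
    and intX: "\<And>i. i \<in> I \<Longrightarrow> integrable M (X i)"
    and meanX: "\<And>i. i \<in> I \<Longrightarrow> expectation (X i) = 0"
    and intsq: "\<And>i. i \<in> I \<Longrightarrow> integrable M (\<lambda>\<omega>. X i \<omega> * cnj (X i \<omega>))"
    and Esq: "\<And>i. i \<in> I \<Longrightarrow> expectation (\<lambda>\<omega>. X i \<omega> * cnj (X i \<omega>)) = complex_of_real (v i)"
    and abcd: "a \<in> I" "b \<in> I" "c \<in> I" "d \<in> I"
    and ne: "a \<noteq> b" "a \<noteq> d" "c \<noteq> b" "c \<noteq> d"
    and acbd: "a = c \<Longrightarrow> b = d"
  shows "integrable M (\<lambda>\<omega>. cnj (X a \<omega>) * X b \<omega> * X c \<omega> * cnj (X d \<omega>))
       \<and> expectation (\<lambda>\<omega>. cnj (X a \<omega>) * X b \<omega> * X c \<omega> * cnj (X d \<omega>))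
         = (if a = c \<and> b = d then complex_of_real (v a * v b) else 0)"
proof (cases "a = c")
  case True
  with acbd have bd: "b = d" by simp
  have eq: "(\<lambda>\<omega>. cnj (X a \<omega>) * X b \<omega> * X c \<omega> * cnj (X d \<omega>))
      = (\<lambda>\<omega>. (X a \<omega> * cnj (X a \<omega>)) * (X b \<omega> * cnj (X b \<omega>)))"
    using True bd by (simp add: fun_eq_iff ac_simps)
  note P = indep_prod[OF ind, of a "{b}" "\<lambda>x. x * cnj x" "\<lambda>f. f b * cnj (f b)"
      "\<lambda>\<omega>. X b \<omega> * cnj (X b \<omega>)"]
  have p1: "integrable M (\<lambda>\<omega>. (X a \<omega> * cnj (X a \<omega>)) * (X b \<omega> * cnj (X b \<omega>)))"
    using abcd ne by (intro P(1) mf_sq Fmeas intsq) auto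
  have p2: "expectation (\<lambda>\<omega>. (X a \<omega> * cnj (X a \<omega>)) * (X b \<omega> * cnj (X b \<omega>)))
      = complex_of_real (v a) * complex_of_real (v b)"
    using abcd ne by (subst P(2)) (auto intro!: mf_sq Fmeas intsq simp: Esq)
  show ?thesis using p1 p2 True bd unfolding eq by simp
next
  case False
  show ?thesis
  proof (cases "b = d")
    case True
    have eq: "(\<lambda>\<omega>. cnj (X a \<omega>) * X b \<omega> * X c \<omega> * cnj (X d \<omega>))
      = (\<lambda>\<omega>. cnj (X a \<omega>) * ((X b \<omega> * cnj (X b \<omega>)) * X c \<omega>))"
      using True by (simp add: fun_eq_iff ac_simps)
    note Q = indep_prod[OF ind, of b "{c}" "\<lambda>x. x * cnj x" "\<lambda>f. f c" "X c"]
    have q1: "integrable M (\<lambda>\<omega>. (X b \<omega> * cnj (X b \<omega>)) * X c \<omega>)"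
      using abcd ne by (intro Q(1) mf_sq comp_meas intsq intX) auto
    note P = indep_prod[OF ind, of a "{b,c}" "\<lambda>x. cnj x" "\<lambda>f. (f b * cnj (f b)) * f c"
      "\<lambda>\<omega>. (X b \<omega> * cnj (X b \<omega>)) * X c \<omega>"]
    have p1: "integrable M (\<lambda>\<omega>. cnj (X a \<omega>) * ((X b \<omega> * cnj (X b \<omega>)) * X c \<omega>))"
      using abcd ne False q1 intX[OF abcd(1)] by (intro P(1) mf_cnj Fmeas) auto
    have p2: "expectation (\<lambda>\<omega>. cnj (X a \<omega>) * ((X b \<omega> * cnj (X b \<omega>)) * X c \<omega>)) = 0"
      using abcd ne False q1 intX[OF abcd(1)] by (subst P(2)) (auto intro!: mf_cnj Fmeas simp: meanX)
    show ?thesis using p1 p2 False unfolding eq by simp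
  next
    case bd: False
    have eq: "(\<lambda>\<omega>. cnj (X a \<omega>) * X b \<omega> * X c \<omega> * cnj (X d \<omega>))
      = (\<lambda>\<omega>. X b \<omega> * (cnj (X a \<omega>) * (X c \<omega> * cnj (X d \<omega>))))"
      by (simp add: fun_eq_iff ac_simps)
    note R = indep_prod[OF ind, of c "{d}" "\<lambda>x. x" "\<lambda>f. cnj (f d)" "\<lambda>\<omega>. cnj (X d \<omega>)"]
    have r1: "integrable M (\<lambda>\<omega>. X c \<omega> * cnj (X d \<omega>))"
      using abcd ne by (intro R(1) mf_id Fmeas intX integrable_cnj) auto
    note Q = indep_prod[OF ind, of a "{c,d}" "\<lambda>x. cnj x" "\<lambda>f. f c * cnj (f d)"
       "\<lambda>\<omega>. X c \<omega> * cnj (X d \<omega>)"]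
    have q1: "integrable M (\<lambda>\<omega>. cnj (X a \<omega>) * (X c \<omega> * cnj (X d \<omega>)))"
      using abcd ne False r1 by (intro Q(1) mf_cnj Fmeas intX integrable_cnj) auto
    note P = indep_prod[OF ind, of b "{a,c,d}" "\<lambda>x. x" "\<lambda>f. cnj (f a) * (f c * cnj (f d))"
       "\<lambda>\<omega>. cnj (X a \<omega>) * (X c \<omega> * cnj (X d \<omega>))"]
    have p1: "integrable M (\<lambda>\<omega>. X b \<omega> * (cnj (X a \<omega>) * (X c \<omega> * cnj (X d \<omega>))))"
      using abcd ne bd q1 by (intro P(1) mf_id Fmeas intX) auto
    have p2: "expectation (\<lambda>\<omega>. X b \<omega> * (cnj (X a \<omega>) * (X c \<omega> * cnj (X d \<omega>)))) = 0"
      using abcd ne bd q1 by (subst P(2)) (auto intro!: mf_id Fmeas intX simp: meanX intX)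
    show ?thesis using p1 p2 False unfolding eq by simp
  qed
qed


lemma (in prob_space) sum_sq:
  fixes W :: "'j \<Rightarrow> 'a \<Rightarrow> complex"
  assumes J: "finite J"
    and int: "\<And>i j. i \<in> J \<Longrightarrow> j \<in> J \<Longrightarrow> integrable M (\<lambda>\<omega>. W i \<omega> * cnj (W j \<omega>))"
    and E: "\<And>i j. i \<in> J \<Longrightarrow> j \<in> J \<Longrightarrow>
       expectation (\<lambda>\<omega>. W i \<omega> * cnj (W j \<omega>)) = (if i = j then complex_of_real (e i) else 0)"
  shows "integrable M (\<lambda>\<omega>. (\<Sum>j\<in>J. W j \<omega>) * cnj (\<Sum>j\<in>J. W j \<omega>))"
    "expectation (\<lambda>\<omega>. (\<Sum>j\<in>J. W j \<omega>) * cnj (\<Sum>j\<in>J. W j \<omega>)) = complex_of_real (\<Sum>j\<in>J. e j)"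
proof -
  have eq: "(\<lambda>\<omega>. (\<Sum>j\<in>J. W j \<omega>) * cnj (\<Sum>j\<in>J. W j \<omega>))
      = (\<lambda>\<omega>. \<Sum>i\<in>J. \<Sum>j\<in>J. W i \<omega> * cnj (W j \<omega>))"
    by (simp add: sum_product)
  show "integrable M (\<lambda>\<omega>. (\<Sum>j\<in>J. W j \<omega>) * cnj (\<Sum>j\<in>J. W j \<omega>))"
    unfolding eq by (intro Bochner_Integration.integrable_sum int)
  have "expectation (\<lambda>\<omega>. \<Sum>i\<in>J. \<Sum>j\<in>J. W i \<omega> * cnj (W j \<omega>))
      = (\<Sum>i\<in>J. \<Sum>j\<in>J. expectation (\<lambda>\<omega>. W i \<omega> * cnj (W j \<omega>)))"
    by (simp add: Bochner_Integration.integral_sum Bochner_Integration.integrable_sum int)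
  also have "\<dots> = (\<Sum>i\<in>J. \<Sum>j\<in>J. (if i = j then complex_of_real (e i) else 0))"
    by (intro sum.cong refl) (simp add: E)
  also have "\<dots> = complex_of_real (\<Sum>j\<in>J. e j)"
    using J by simp
  finally show "expectation (\<lambda>\<omega>. (\<Sum>j\<in>J. W j \<omega>) * cnj (\<Sum>j\<in>J. W j \<omega>)) = complex_of_real (\<Sum>j\<in>J. e j)"
    unfolding eq .
qed


definition XX :: "(nat \<Rightarrow> nat \<Rightarrow> nat \<Rightarrow> 'a \<Rightarrow> complex) \<Rightarrow> (nat \<Rightarrow> nat \<Rightarrow> 'a \<Rightarrow> complex) \<Rightarrow> rv_index \<Rightarrow> 'a \<Rightarrow> complex" where
  "XX g z i = (case i of Gidx m k n \<Rightarrow> g m k n | Zidx k n \<Rightarrow> z k n | Cfam \<Rightarrow> (\<lambda>_. 0))"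

definition vv :: "real \<Rightarrow> real \<Rightarrow> rv_index \<Rightarrow> real" where
  "vv a b i = (case i of Gidx _ _ _ \<Rightarrow> a | Zidx _ _ \<Rightarrow> b | Cfam \<Rightarrow> 1)"

lemma sq_bound:
  fixes x Cc p s b :: real
  assumes "0 < p" "p \<le> Cc" "0 < s" "0 < b"
  shows "(x / (Cc * s * b))\<^sup>2 \<le> x\<^sup>2 / (p * s * b)\<^sup>2"
proof -
  have "(p * s * b)\<^sup>2 \<le> (Cc * s * b)\<^sup>2"
    using assms by (intro power_mono mult_right_mono) auto
  moreover have "0 < (p * s * b)\<^sup>2" using assms by simp
  ultimately have "x\<^sup>2 / (Cc * s * b)\<^sup>2 \<le> x\<^sup>2 / (p * s * b)\<^sup>2"
    by (intro divide_left_mono mult_pos_pos) auto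
  then show ?thesis by (simp add: power_divide)
qed


theorem lemma6:
  fixes \<Omega> :: "'a measure"
    and M K N :: nat and S :: "nat set"
    and sh2 sz2 bbar p :: real and \<beta> :: "nat \<Rightarrow> real"
    and c :: "nat \<Rightarrow> 'a \<Rightarrow> nat"
    and g :: "nat \<Rightarrow> nat \<Rightarrow> nat \<Rightarrow> 'a \<Rightarrow> complex"
    and z :: "nat \<Rightarrow> nat \<Rightarrow> 'a \<Rightarrow> complex"
  assumes "prob_space \<Omega>"
    and "M \<ge> 1" "K \<ge> 1" "N \<ge> 1"
    and "S \<subseteq> {1..M}" "S \<noteq> {}"
    and "sh2 > 0" "sz2 > 0" "bbar > 0" "p > 0"
    and "\<And>m. m \<in> S \<Longrightarrow> \<beta> m > 0"
    and "\<And>m. m \<in> S \<Longrightarrow> c m \<in> measurable \<Omega> (count_space UNIV)"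
    and "\<And>m \<omega>. m \<in> S \<Longrightarrow> \<omega> \<in> space \<Omega> \<Longrightarrow> c m \<omega> \<ge> 1"
    and "\<And>m k n. m \<in> S \<Longrightarrow> k \<in> {1..K} \<Longrightarrow> n \<in> {1..N} \<Longrightarrow> complex_normal \<Omega> (g m k n) sh2"
    and "\<And>k n. k \<in> {1..K} \<Longrightarrow> n \<in> {1..N} \<Longrightarrow> complex_normal \<Omega> (z k n) sz2"
    and "prob_space.indep_sets \<Omega> (rv_sigma \<Omega> S g z c) (rv_indices S K N)"
  shows "(\<Sum>n\<in>{1..2*N}. prob_space.expectation \<Omega>
            (\<lambda>\<omega>. (dtheta3 S K N sh2 bbar p \<beta> c g z n \<omega>)\<^sup>2))
         \<le> sz2 * real N / (p\<^sup>2 * real K * sh2) * (\<Sum>m\<in>S. \<beta> m / bbar\<^sup>2)"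
proof -
  interpret P: prob_space \<Omega> by (rule assms(1))
  have finS: "finite S" using assms(5) finite_subset by blast
  define I0 where "I0 = rv_indices S K N - {Cfam}"
  have cnI: "complex_normal \<Omega> (XX g z i) (vv sh2 sz2 i)" if "i \<in> I0" for i
    using that by (cases i) (auto simp: I0_def rv_indices_def XX_def vv_def intro: assms(14,15))
  have vpos: "vv sh2 sz2 i > 0" for i
    using assms(7,8) by (cases i) (auto simp: vv_def)
  have ind: "P.indep_vars (\<lambda>_. borel) (XX g z) I0"
    unfolding P.indep_vars_def2
  proof
    show "\<forall>i\<in>I0. XX g z i \<in> borel_measurable \<Omega>" using cnI by (auto simp: complex_normal_def)
    have "P.indep_sets (rv_sigma \<Omega> S g z c) I0"
      by (rule P.indep_sets_mono_index[OF _ assms(16)]) (auto simp: I0_def)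
    moreover have "P.indep_sets (rv_sigma \<Omega> S g z c) I0 =
        P.indep_sets (\<lambda>i. {XX g z i -` A \<inter> space \<Omega> |A. A \<in> sets borel}) I0"
    proof (rule P.indep_sets_cong)
      fix i assume "i \<in> I0"
      then show "rv_sigma \<Omega> S g z c i = {XX g z i -` A \<inter> space \<Omega> |A. A \<in> sets borel}"
        by (cases i) (auto simp: I0_def rv_indices_def rv_sigma_def XX_def)
    qed simp
    ultimately show "P.indep_sets (\<lambda>i. {XX g z i -` A \<inter> space \<Omega> |A. A \<in> sets borel}) I0"
      by simp
  qed
  have XF: "integrable \<Omega> (XX g z i) \<and> P.expectation (XX g z i) = 0 \<and>
      integrable \<Omega> (\<lambda>\<omega>. XX g z i \<omega> * cnj (XX g z i \<omega>)) \<and>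
      P.expectation (\<lambda>\<omega>. XX g z i \<omega> * cnj (XX g z i \<omega>)) = complex_of_real (vv sh2 sz2 i)"
    if "i \<in> I0" for i
    using P.cn_facts[OF cnI[OF that] vpos] by blast
  define Wf where "Wf n j \<omega> = cnj (complex_of_real (sqrt (\<beta> (fst j))) * g (fst j) (snd j) n \<omega>) * z (snd j) n \<omega>"
    for n :: nat and j :: "nat \<times> nat" and \<omega>
  have Wterm: "integrable \<Omega> (\<lambda>\<omega>. Wf n j \<omega> * cnj (Wf n j' \<omega>)) \<and>
      P.expectation (\<lambda>\<omega>. Wf n j \<omega> * cnj (Wf n j' \<omega>)) =
        (if j = j' then complex_of_real (\<beta> (fst j) * sh2 * sz2) else 0)"
    if n: "n \<in> {1..N}" and j: "j \<in> S \<times> {1..K}" and j': "j' \<in> S \<times> {1..K}" for n j j'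
  proof -
    obtain m k where jj: "j = (m, k)" by (cases j)
    obtain m' k' where jj': "j' = (m', k')" by (cases j')
    have mem: "Gidx m k n \<in> I0" "Zidx k n \<in> I0" "Gidx m' k' n \<in> I0" "Zidx k' n \<in> I0"
      using n j j' jj jj' by (auto simp: I0_def rv_indices_def)
    define Q where "Q \<omega> = cnj (g m k n \<omega>) * z k n \<omega> * g m' k' n \<omega> * cnj (z k' n \<omega>)" for \<omega>
    have C4: "integrable \<Omega> Q \<and> P.expectation Q =
        (if j = j' then complex_of_real (sh2 * sz2) else 0)"
      using P.core4[OF ind, of "vv sh2 sz2", OF conjunct1[OF XF] conjunct1[OF conjunct2[OF XF]]
          conjunct1[OF conjunct2[OF conjunct2[OF XF]]] conjunct2[OF conjunct2[OF conjunct2[OF XF]]]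
          mem] jj jj'
      by (simp add: Q_def[abs_def] XX_def vv_def)
    have eqW: "(\<lambda>\<omega>. Wf n j \<omega> * cnj (Wf n j' \<omega>)) =
        (\<lambda>\<omega>. complex_of_real (sqrt (\<beta> m) * sqrt (\<beta> m')) * Q \<omega>)"
      by (simp add: Wf_def Q_def fun_eq_iff jj jj' ac_simps)
    have bm: "\<beta> m > 0" using j jj assms(11) by auto
    have sq: "complex_of_real (sqrt (\<beta> m)) * complex_of_real (sqrt (\<beta> m)) = complex_of_real (\<beta> m)"
      using bm by (simp flip: of_real_mult)
    show ?thesis
      unfolding eqW using C4 bm sq by (auto simp: jj jj')
  qed
  define y where "y n \<omega> = y_noise S K \<beta> g z n \<omega>" for n \<omega>
  define J where "J = S \<times> {1..K}"
  have finJ: "finite J" using finS by (simp add: J_def)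
  have Yeq: "y n \<omega> = (1 / of_nat K) * (\<Sum>j\<in>J. Wf n j \<omega>)" for n \<omega>
    by (simp add: y_def J_def y_noise_def Wf_def sum.cartesian_product split_def)
  have sumb: "(\<Sum>j\<in>J. \<beta> (fst j) * sh2 * sz2) = real K * sh2 * sz2 * (\<Sum>m\<in>S. \<beta> m)"
  proof -
    have "(\<Sum>j\<in>J. \<beta> (fst j) * sh2 * sz2) = (\<Sum>m\<in>S. \<Sum>k\<in>{1..K}. \<beta> m * sh2 * sz2)"
      unfolding J_def sum.cartesian_product by (simp add: split_def)
    also have "\<dots> = real K * sh2 * sz2 * (\<Sum>m\<in>S. \<beta> m)"
      by (simp add: sum_distrib_left ac_simps)
    finally show ?thesis .
  qed
  have YY: "integrable \<Omega> (\<lambda>\<omega>. (Re (y n \<omega>))\<^sup>2 + (Im (y n \<omega>))\<^sup>2) \<and>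
      P.expectation (\<lambda>\<omega>. (Re (y n \<omega>))\<^sup>2 + (Im (y n \<omega>))\<^sup>2) = sh2 * sz2 * (\<Sum>m\<in>S. \<beta> m) / real K"
    if n: "n \<in> {1..N}" for n
  proof -
    have SW: "integrable \<Omega> (\<lambda>\<omega>. (\<Sum>j\<in>J. Wf n j \<omega>) * cnj (\<Sum>j\<in>J. Wf n j \<omega>))"
      "P.expectation (\<lambda>\<omega>. (\<Sum>j\<in>J. Wf n j \<omega>) * cnj (\<Sum>j\<in>J. Wf n j \<omega>))
        = complex_of_real (\<Sum>j\<in>J. \<beta> (fst j) * sh2 * sz2)"
      using P.sum_sq[of J "Wf n" "\<lambda>j. \<beta> (fst j) * sh2 * sz2", OF finJ] Wterm[OF n] by (auto simp: J_def)
    have Yn: "(\<lambda>\<omega>. complex_of_real ((Re (y n \<omega>))\<^sup>2 + (Im (y n \<omega>))\<^sup>2)) =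
       (\<lambda>\<omega>. complex_of_real (1 / (real K)\<^sup>2) * ((\<Sum>j\<in>J. Wf n j \<omega>) * cnj (\<Sum>j\<in>J. Wf n j \<omega>)))"
    proof
      fix \<omega>
      have "complex_of_real ((Re (y n \<omega>))\<^sup>2 + (Im (y n \<omega>))\<^sup>2) = y n \<omega> * cnj (y n \<omega>)"
        by (simp add: complex_mult_cnj)
      also have "\<dots> = complex_of_real (1 / (real K)\<^sup>2) * ((\<Sum>j\<in>J. Wf n j \<omega>) * cnj (\<Sum>j\<in>J. Wf n j \<omega>))"
        unfolding Yeq by (simp add: power2_eq_square)
      finally show "complex_of_real ((Re (y n \<omega>))\<^sup>2 + (Im (y n \<omega>))\<^sup>2) = \<dots>" .
    qed
    have i1: "integrable \<Omega> (\<lambda>\<omega>. complex_of_real ((Re (y n \<omega>))\<^sup>2 + (Im (y n \<omega>))\<^sup>2))"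
      unfolding Yn using SW(1) by simp
    have e1: "complex_of_real (P.expectation (\<lambda>\<omega>. (Re (y n \<omega>))\<^sup>2 + (Im (y n \<omega>))\<^sup>2))
        = complex_of_real (1 / (real K)\<^sup>2 * (real K * sh2 * sz2 * (\<Sum>m\<in>S. \<beta> m)))"
      unfolding integral_complex_of_real[symmetric] Yn integral_mult_right_zero SW(2) sumb by simp
    have "P.expectation (\<lambda>\<omega>. (Re (y n \<omega>))\<^sup>2 + (Im (y n \<omega>))\<^sup>2)
        = 1 / (real K)\<^sup>2 * (real K * sh2 * sz2 * (\<Sum>m\<in>S. \<beta> m))"
      using e1 of_real_eq_iff by blast
    also have "\<dots> = sh2 * sz2 * (\<Sum>m\<in>S. \<beta> m) / real K"
      using assms(3) by (simp add: power2_eq_square)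
    finally show ?thesis using i1 complex_of_real_integrable_eq by blast
  qed
  have ymeas: "y n \<in> borel_measurable \<Omega>" if n: "n \<in> {1..N}" for n
  proof -
    have Wm: "Wf n j \<in> borel_measurable \<Omega>" if j: "j \<in> J" for j
    proof -
      have "g (fst j) (snd j) n \<in> borel_measurable \<Omega>" "z (snd j) n \<in> borel_measurable \<Omega>"
        using assms(14,15) n j by (auto simp: J_def complex_normal_def)
      then show ?thesis unfolding Wf_def[abs_def]
        by (intro borel_measurable_times measurable_compose[OF _ mf_cnj] borel_measurable_const)
    qed
    have "y n = (\<lambda>\<omega>. (1 / of_nat K) * (\<Sum>j\<in>J. Wf n j \<omega>))" by (simp add: fun_eq_iff Yeq)
    then show ?thesis using Wm
      by (simp add: borel_measurable_times borel_measurable_sum)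
  qed
  define Qd where "Qd = (p * sh2 * bbar)\<^sup>2"
  have Qpos: "Qd > 0" using assms(7,9,10) by (simp add: Qd_def)
  have Cge: "p \<le> C_tot S p c \<omega>" if "\<omega> \<in> space \<Omega>" for \<omega>
  proof -
    obtain m0 where m0: "m0 \<in> S" using assms(6) by blast
    have "p \<le> p * real (c m0 \<omega>)" using assms(13)[OF m0 that] assms(10) by simp
    also have "\<dots> \<le> (\<Sum>m\<in>S. p * real (c m \<omega>))"
      by (rule member_le_sum[OF m0 _ finS]) (use assms(10) in simp)
    finally show ?thesis by (simp add: C_tot_def)
  qed
  have TU: "integrable \<Omega> (\<lambda>\<omega>. (Re (y n \<omega>))\<^sup>2) \<and> integrable \<Omega> (\<lambda>\<omega>. (Im (y n \<omega>))\<^sup>2)"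
    if n: "n \<in> {1..N}" for n
  proof
    show "integrable \<Omega> (\<lambda>\<omega>. (Re (y n \<omega>))\<^sup>2)"
      by (rule Bochner_Integration.integrable_bound[OF conjunct1[OF YY[OF n]]]) (use ymeas[OF n] in auto)
    show "integrable \<Omega> (\<lambda>\<omega>. (Im (y n \<omega>))\<^sup>2)"
      by (rule Bochner_Integration.integrable_bound[OF conjunct1[OF YY[OF n]]]) (use ymeas[OF n] in auto)
  qed
  have B1: "P.expectation (\<lambda>\<omega>. (dtheta3 S K N sh2 bbar p \<beta> c g z n \<omega>)\<^sup>2)
      \<le> P.expectation (\<lambda>\<omega>. (Re (y n \<omega>))\<^sup>2) / Qd" if n: "n \<in> {1..N}" for n
  proof -
    have "P.expectation (\<lambda>\<omega>. (dtheta3 S K N sh2 bbar p \<beta> c g z n \<omega>)\<^sup>2)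
      \<le> P.expectation (\<lambda>\<omega>. (Re (y n \<omega>))\<^sup>2 / Qd)"
    proof (rule integral_mono_AE')
      show "integrable \<Omega> (\<lambda>\<omega>. (Re (y n \<omega>))\<^sup>2 / Qd)" using TU[OF n] by simp
      show "AE \<omega> in \<Omega>. 0 \<le> (Re (y n \<omega>))\<^sup>2 / Qd" using Qpos by simp
      show "AE \<omega> in \<Omega>. (dtheta3 S K N sh2 bbar p \<beta> c g z n \<omega>)\<^sup>2 \<le> (Re (y n \<omega>))\<^sup>2 / Qd"
      proof (rule AE_I2)
        fix \<omega> assume "\<omega> \<in> space \<Omega>"
        then show "(dtheta3 S K N sh2 bbar p \<beta> c g z n \<omega>)\<^sup>2 \<le> (Re (y n \<omega>))\<^sup>2 / Qd"
          using n sq_bound[OF assms(10) Cge assms(7,9)] by (simp add: dtheta3_def y_def Qd_def)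
      qed
    qed
    then show ?thesis by simp
  qed
  have B2: "P.expectation (\<lambda>\<omega>. (dtheta3 S K N sh2 bbar p \<beta> c g z (n + N) \<omega>)\<^sup>2)
      \<le> P.expectation (\<lambda>\<omega>. (Im (y n \<omega>))\<^sup>2) / Qd" if n: "n \<in> {1..N}" for n
  proof -
    have "P.expectation (\<lambda>\<omega>. (dtheta3 S K N sh2 bbar p \<beta> c g z (n + N) \<omega>)\<^sup>2)
      \<le> P.expectation (\<lambda>\<omega>. (Im (y n \<omega>))\<^sup>2 / Qd)"
    proof (rule integral_mono_AE')
      show "integrable \<Omega> (\<lambda>\<omega>. (Im (y n \<omega>))\<^sup>2 / Qd)" using TU[OF n] by simp
      show "AE \<omega> in \<Omega>. 0 \<le> (Im (y n \<omega>))\<^sup>2 / Qd" using Qpos by simp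
      show "AE \<omega> in \<Omega>. (dtheta3 S K N sh2 bbar p \<beta> c g z (n + N) \<omega>)\<^sup>2 \<le> (Im (y n \<omega>))\<^sup>2 / Qd"
      proof (rule AE_I2)
        fix \<omega> assume "\<omega> \<in> space \<Omega>"
        then show "(dtheta3 S K N sh2 bbar p \<beta> c g z (n + N) \<omega>)\<^sup>2 \<le> (Im (y n \<omega>))\<^sup>2 / Qd"
          using n sq_bound[OF assms(10) Cge assms(7,9)] by (simp add: dtheta3_def y_def Qd_def)
      qed
    qed
    then show ?thesis by simp
  qed
  have B: "P.expectation (\<lambda>\<omega>. (dtheta3 S K N sh2 bbar p \<beta> c g z n \<omega>)\<^sup>2)
      + P.expectation (\<lambda>\<omega>. (dtheta3 S K N sh2 bbar p \<beta> c g z (n + N) \<omega>)\<^sup>2)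
      \<le> sh2 * sz2 * (\<Sum>m\<in>S. \<beta> m) / real K / Qd" (is "?f1 + ?f2 \<le> _") if n: "n \<in> {1..N}" for n
  proof -
    have "P.expectation (\<lambda>\<omega>. (Re (y n \<omega>))\<^sup>2) + P.expectation (\<lambda>\<omega>. (Im (y n \<omega>))\<^sup>2)
        = sh2 * sz2 * (\<Sum>m\<in>S. \<beta> m) / real K"
      using YY[OF n] TU[OF n] by (simp add: Bochner_Integration.integral_add)
    note eq = this
    have "?f1 + ?f2 \<le> P.expectation (\<lambda>\<omega>. (Re (y n \<omega>))\<^sup>2) / Qd + P.expectation (\<lambda>\<omega>. (Im (y n \<omega>))\<^sup>2) / Qd"
      by (rule add_mono[OF B1[OF n] B2[OF n]])
    also have "\<dots> = (P.expectation (\<lambda>\<omega>. (Re (y n \<omega>))\<^sup>2) + P.expectation (\<lambda>\<omega>. (Im (y n \<omega>))\<^sup>2)) / Qd"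
      by (simp add: add_divide_distrib)
    also have "\<dots> = sh2 * sz2 * (\<Sum>m\<in>S. \<beta> m) / real K / Qd" by (simp only: eq)
    finally show ?thesis .
  qed
  let ?f = "\<lambda>n. P.expectation (\<lambda>\<omega>. (dtheta3 S K N sh2 bbar p \<beta> c g z n \<omega>)\<^sup>2)"
  have split: "{1..2*N} = {1..N} \<union> {1+N..N+N}" by auto
  have "(\<Sum>n\<in>{1..2*N}. ?f n) = (\<Sum>n\<in>{1..N}. ?f n) + (\<Sum>n\<in>{1+N..N+N}. ?f n)"
    unfolding split by (rule sum.union_disjoint) auto
  also have "(\<Sum>n\<in>{1+N..N+N}. ?f n) = (\<Sum>n\<in>{1..N}. ?f (n + N))"
    by (rule sum.shift_bounds_cl_nat_ivl)
  also have "(\<Sum>n\<in>{1..N}. ?f n) + (\<Sum>n\<in>{1..N}. ?f (n + N)) = (\<Sum>n\<in>{1..N}. ?f n + ?f (n + N))"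
    by (simp add: sum.distrib)
  also have "\<dots> \<le> (\<Sum>n\<in>{1..N}. sh2 * sz2 * (\<Sum>m\<in>S. \<beta> m) / real K / Qd)"
    by (rule sum_mono) (rule B)
  also have "\<dots> = sz2 * real N / (p\<^sup>2 * real K * sh2) * (\<Sum>m\<in>S. \<beta> m / bbar\<^sup>2)"
    using assms(7,9,10) by (simp add: Qd_def sum_divide_distrib[symmetric] power2_eq_square field_simps)
  finally show ?thesis .
qed

end
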